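(* Let $q\in(0,1)$, let $S$ be a Schur function (analytic in the open unit disk with $|S|\le1$ there) and let $k\in\mathbb N_0$. Then the function $z\mapsto S(z\sqrt{1-q}\,q^{k/2})$ is a contractive multiplier of $\mathbf H_{2,q}$.
   Context: $[0]_q=1$, $[k]_q=1+q+\cdots+q^{k-1}$ ($k\ge1$), $[k]_q!=\prod_{j=1}^k[j]_q$, $[0]_q!=1$. $E_q(x)=\sum_{k\ge0}x^k/[k]_q!=\prod_{j=0}^\infty(1-(1-q)q^jx)^{-1}$ for $|x|<1/(1-q)$. $\mathbf H_{2,q}$ is the reproducing kernel Hilbert space with kernel $E_q(z\overline w)$ on $|z|<1/\sqrt{1-q}$. A contractive multiplier is a function $s$ such that multiplication by $s$ is a contraction of $\mathbf H_{2,q}$ into itself. *)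

theory Defs
  imports "HOL-Analysis.Analysis"
begin

text \<open>q-numbers: [k]_q = 1 + q + ... + q^(k-1); [0]_q = 1 per the paper's convention.\<close>
definition qint :: "real \<Rightarrow> nat \<Rightarrow> real" where
  "qint q k = (if k = 0 then 1 else (\<Sum>j<k. q ^ j))"

definition qfact :: "real \<Rightarrow> nat \<Rightarrow> real" where
  "qfact q k = (\<Prod>j\<in>{1..k}. qint q j)"

definition qdisk :: "real \<Rightarrow> complex set" where
  "qdisk q = ball 0 (1 / sqrt (1 - q))"

text \<open>f belongs to H_{2,q} with Taylor coefficients a: the RKHS with kernel
  E_q(z conj w) = sum_n z^n conj(w)^n / [n]_q! consists exactly of the power series
  sum a_n z^n on qdisk q with finite norm sum_n [n]_q! |a_n|^2.\<close>
definition H2q_coeffs :: "real \<Rightarrow> (complex \<Rightarrow> complex) \<Rightarrow> (nat \<Rightarrow> complex) \<Rightarrow> bool" where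
  "H2q_coeffs q f a \<longleftrightarrow>
     summable (\<lambda>n. qfact q n * (cmod (a n))\<^sup>2) \<and>
     (\<forall>z\<in>qdisk q. (\<lambda>n. a n * z ^ n) sums f z)"

definition H2q_normsq :: "real \<Rightarrow> (nat \<Rightarrow> complex) \<Rightarrow> real" where
  "H2q_normsq q a = (\<Sum>n. qfact q n * (cmod (a n))\<^sup>2)"

definition contractive_multiplier :: "real \<Rightarrow> (complex \<Rightarrow> complex) \<Rightarrow> bool" where
  "contractive_multiplier q s \<longleftrightarrow>
     (\<forall>f a. H2q_coeffs q f a \<longrightarrow>
        (\<exists>b. H2q_coeffs q (\<lambda>z. s z * f z) b \<and> H2q_normsq q b \<le> H2q_normsq q a))"

definition schur_function :: "(complex \<Rightarrow> complex) \<Rightarrow> bool" where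
  "schur_function S \<longleftrightarrow> S holomorphic_on ball 0 1 \<and> (\<forall>z\<in>ball 0 1. cmod (S z) \<le> 1)"

end

theory Submission
  imports Defs "HOL-Complex_Analysis.Complex_Analysis"
begin


lemma cis_sum_zero:
  fixes d :: int and M :: nat
  assumes "d \<noteq> 0" "\<bar>d\<bar> < int M"
  shows "(\<Sum>k<M. cis (2 * pi * real k * real_of_int d / real M)) = 0"
proof -
  have M: "M > 0" using assms by auto
  define \<omega> where "\<omega> = cis (2 * pi * real_of_int d / real M)"
  have [simp]: "\<omega> \<noteq> 1"
  proof
    assume "\<omega> = 1"
    then obtain j :: int where "2 * pi * real_of_int d / real M = real_of_int j * 2 * pi"
      by (auto simp: \<omega>_def complex_eq_iff cos_one_2pi_int)
    hence "real_of_int d = real_of_int (j * int M)" using M by (simp add: field_simps)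
    hence d: "d = j * int M" by linarith
    hence "j \<noteq> 0" using assms by auto
    hence "\<bar>j\<bar> \<ge> 1" by arith
    hence "\<bar>j\<bar> * int M \<ge> 1 * int M" by (intro mult_right_mono) auto
    hence "\<bar>d\<bar> \<ge> int M" unfolding d abs_mult by simp
    thus False using assms by simp
  qed
  have "(\<Sum>k<M. cis (2 * pi * real k * real_of_int d / real M)) = (\<Sum>k<M. \<omega> ^ k)"
    by (intro sum.cong refl) (simp only: \<omega>_def Complex.DeMoivre, simp add: field_simps)
  also have "\<dots> = (\<omega> ^ M - 1) / (\<omega> - 1)"
    by (subst geometric_sum) auto
  also have "\<omega> ^ M = cis (2 * pi * real_of_int d)" using M by (auto simp: \<omega>_def Complex.DeMoivre)
  also have "\<dots> = 1" by simp
  finally show ?thesis by simp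
qed

lemma discrete_parseval:
  fixes c :: "nat \<Rightarrow> complex" and M N :: nat
  assumes "N < M"
  shows "(\<Sum>k<M. (cmod (\<Sum>n\<le>N. c n * cis (2 * pi * real k * real n / real M)))\<^sup>2)
         = real M * (\<Sum>n\<le>N. (cmod (c n))\<^sup>2)"
proof -
  let ?e = "\<lambda>k n. cis (2 * pi * real k * real n / real M)"
  have E: "(\<Sum>k<M. ?e k n * cnj (?e k l)) = (if n = l then of_nat M else 0)"
    if "n \<le> N" "l \<le> N" for n l
  proof (cases "n = l")
    case True
    thus ?thesis by (simp add: cis_cnj cis_mult)
  next
    case False
    have "(\<Sum>k<M. ?e k n * cnj (?e k l)) = (\<Sum>k<M. cis (2 * pi * real k * real_of_int (int n - int l) / real M))"
      by (intro sum.cong refl) (simp add: cis_cnj cis_mult field_simps)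
    also have "\<dots> = 0" using False that assms by (intro cis_sum_zero) auto
    finally show ?thesis using False by simp
  qed
  have "complex_of_real (\<Sum>k<M. (cmod (\<Sum>n\<le>N. c n * ?e k n))\<^sup>2)
      = (\<Sum>k<M. (\<Sum>n\<le>N. c n * ?e k n) * cnj (\<Sum>l\<le>N. c l * ?e k l))"
    by (simp only: of_real_sum complex_norm_square)
  also have "\<dots> = (\<Sum>k<M. \<Sum>n\<le>N. \<Sum>l\<le>N. c n * cnj (c l) * (?e k n * cnj (?e k l)))"
    by (simp add: sum_product cnj_sum mult_ac)
  also have "\<dots> = (\<Sum>n\<le>N. \<Sum>l\<le>N. c n * cnj (c l) * (\<Sum>k<M. ?e k n * cnj (?e k l)))"
    by (simp add: sum_distrib_left sum.swap[of _ "{..<M}"])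
  also have "\<dots> = (\<Sum>n\<le>N. \<Sum>l\<le>N. c n * cnj (c l) * (if n = l then of_nat M else 0))"
    by (intro sum.cong refl) (simp add: E)
  also have "\<dots> = (\<Sum>n\<le>N. of_nat M * (c n * cnj (c n)))"
    by (simp add: if_distrib mult_ac sum.delta cong: if_cong)
  also have "\<dots> = complex_of_real (real M * (\<Sum>n\<le>N. (cmod (c n))\<^sup>2))"
    by (simp only: of_real_mult of_real_sum of_real_of_nat_eq complex_norm_square sum_distrib_left)
  finally show ?thesis using of_real_eq_iff by blast
qed



lemma norm_suminf_tail:
  fixes f :: "nat \<Rightarrow> complex"
  assumes s: "summable (\<lambda>n. norm (f n))"
  shows "norm (suminf f - (\<Sum>n<k. f n)) \<le> (\<Sum>n. norm (f n)) - (\<Sum>n<k. norm (f n))"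
proof -
  have sf: "summable f" using s by (rule summable_norm_cancel)
  have "suminf f - (\<Sum>n<k. f n) = (\<Sum>n. f (n + k))"
    using suminf_split_initial_segment[OF sf, of k] by simp
  moreover have "norm (\<Sum>n. f (n + k)) \<le> (\<Sum>n. norm (f (n + k)))"
    by (rule summable_norm) (use s summable_iff_shift[of "\<lambda>n. norm (f n)" k] in simp)
  moreover have "(\<Sum>n. norm (f (n + k))) = (\<Sum>n. norm (f n)) - (\<Sum>n<k. norm (f n))"
    using suminf_split_initial_segment[OF s, of k] by simp
  ultimately show ?thesis by simp
qed

lemma toeplitz_circle:
  fixes T :: "complex \<Rightarrow> complex" and \<tau> \<alpha> :: "nat \<Rightarrow> complex"
  assumes ser: "\<And>u. cmod u < 1 \<Longrightarrow> (\<lambda>j. \<tau> j * u ^ j) sums T u"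
      and bnd: "\<And>u. cmod u < 1 \<Longrightarrow> cmod (T u) \<le> 1"
      and r: "0 < r" "r < 1"
  shows "(\<Sum>n\<le>m. (cmod (\<Sum>j\<le>n. \<tau> j * \<alpha> (n - j)) * r ^ n)\<^sup>2) \<le> (\<Sum>n\<le>m. (cmod (\<alpha> n))\<^sup>2)"
proof -
  define \<alpha>' where "\<alpha>' n = (if n \<le> m then \<alpha> n else 0)" for n
  define \<beta> where "\<beta> n = (\<Sum>j\<le>n. \<tau> j * \<alpha>' (n - j))" for n
  have \<beta>eq: "\<beta> n = (\<Sum>j\<le>n. \<tau> j * \<alpha> (n - j))" if "n \<le> m" for n
    unfolding \<beta>_def using that by (intro sum.cong refl) (auto simp: \<alpha>'_def)
  define Y where "Y = (\<Sum>n\<le>m. (cmod (\<alpha> n))\<^sup>2)"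
  define A1 where "A1 = (\<Sum>n\<le>m. cmod (\<alpha> n))"
  define p where "p x = (\<Sum>n\<le>m. \<alpha> n * x ^ n)" for x :: complex
  have absT: "summable (\<lambda>j. norm (\<tau> j * x ^ j))" if "cmod x \<le> r" for x
  proof -
    have "(\<lambda>j. \<tau> j * complex_of_real ((1 + r) / 2) ^ j) sums T (complex_of_real ((1 + r) / 2))"
      using r by (intro ser) (simp only: norm_of_real, simp)
    hence "summable (\<lambda>j. \<tau> j * complex_of_real ((1 + r) / 2) ^ j)" by (rule sums_summable)
    moreover have "cmod x < cmod (complex_of_real ((1 + r) / 2))"
      using that r by (simp only: norm_of_real, simp)
    ultimately show ?thesis by (rule powser_insidea)
  qed
  have fin\<alpha>': "summable (\<lambda>i. norm (\<alpha>' i * x ^ i))" for x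
    by (rule summable_finite[of "{..m}"]) (auto simp: \<alpha>'_def)
  have suminf\<alpha>': "(\<Sum>i. \<alpha>' i * x ^ i) = p x" for x
    by (subst suminf_finite[of "{..m}"]) (auto simp: \<alpha>'_def p_def)
  have conv: "(\<Sum>i\<le>k. (\<tau> i * x ^ i) * (\<alpha>' (k - i) * x ^ (k - i))) = \<beta> k * x ^ k" for x k
  proof -
    have "(\<Sum>i\<le>k. (\<tau> i * x ^ i) * (\<alpha>' (k - i) * x ^ (k - i))) = (\<Sum>i\<le>k. \<tau> i * \<alpha>' (k - i) * x ^ k)"
    proof (intro sum.cong refl)
      fix i assume "i \<in> {..k}"
      hence "x ^ i * x ^ (k - i) = x ^ k" by (simp add: power_add[symmetric])
      thus "(\<tau> i * x ^ i) * (\<alpha>' (k - i) * x ^ (k - i)) = \<tau> i * \<alpha>' (k - i) * x ^ k"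
        by (metis mult.assoc mult.left_commute)
    qed
    thus ?thesis by (simp add: \<beta>_def sum_distrib_right)
  qed
  have Gsum: "(\<lambda>n. \<beta> n * x ^ n) sums (T x * p x)" if "cmod x \<le> r" for x
  proof -
    have "(\<lambda>k. \<Sum>i\<le>k. (\<tau> i * x ^ i) * (\<alpha>' (k - i) * x ^ (k - i))) sums
            ((\<Sum>j. \<tau> j * x ^ j) * (\<Sum>i. \<alpha>' i * x ^ i))"
      by (rule Cauchy_product_sums[OF absT[OF that] fin\<alpha>'])
    moreover have "(\<Sum>j. \<tau> j * x ^ j) = T x"
      using ser[of x] that r by (simp add: sums_iff)
    ultimately show ?thesis by (simp add: conv suminf\<alpha>')
  qed
  have cB: "summable (\<lambda>n. cmod (\<beta> n) * r ^ n)"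
  proof -
    have "(\<lambda>k. \<Sum>i\<le>k. (cmod (\<tau> i) * r ^ i) * (cmod (\<alpha>' (k - i)) * r ^ (k - i))) sums
            ((\<Sum>j. cmod (\<tau> j) * r ^ j) * (\<Sum>i. cmod (\<alpha>' i) * r ^ i))"
      using absT[of "complex_of_real r"] fin\<alpha>'[of "complex_of_real r"] r
      by (intro Cauchy_product_sums) (auto simp: norm_mult norm_power)
    hence s: "summable (\<lambda>k. \<Sum>i\<le>k. (cmod (\<tau> i) * r ^ i) * (cmod (\<alpha>' (k - i)) * r ^ (k - i)))"
      by (rule sums_summable)
    show ?thesis
    proof (rule summable_comparison_test[OF _ s], intro exI allI impI)
      fix n :: nat
      have "norm (cmod (\<beta> n) * r ^ n) = cmod (\<beta> n * complex_of_real r ^ n)"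
        using r by (simp add: norm_mult norm_power)
      also have "\<dots> = cmod (\<Sum>i\<le>n. (\<tau> i * complex_of_real r ^ i) * (\<alpha>' (n - i) * complex_of_real r ^ (n - i)))"
        by (simp add: conv)
      also have "\<dots> \<le> (\<Sum>i\<le>n. cmod ((\<tau> i * complex_of_real r ^ i) * (\<alpha>' (n - i) * complex_of_real r ^ (n - i))))"
        by (rule norm_sum)
      also have "\<dots> = (\<Sum>i\<le>n. (cmod (\<tau> i) * r ^ i) * (cmod (\<alpha>' (n - i)) * r ^ (n - i)))"
        using r by (simp add: norm_mult norm_power)
      finally show "norm (cmod (\<beta> n) * r ^ n) \<le> (\<Sum>i\<le>n. (cmod (\<tau> i) * r ^ i) * (cmod (\<alpha>' (n - i)) * r ^ (n - i)))" .
    qed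
  qed
  define C where "C = (\<Sum>n. cmod (\<beta> n) * r ^ n)"
  define e where "e N = C - (\<Sum>n<Suc N. cmod (\<beta> n) * r ^ n)" for N
  have e_lim: "e \<longlonglongrightarrow> 0"
  proof -
    have "(\<lambda>N. \<Sum>n<Suc N. cmod (\<beta> n) * r ^ n) \<longlonglongrightarrow> C"
      unfolding C_def using summable_LIMSEQ[OF cB] by (rule LIMSEQ_Suc)
    hence "(\<lambda>N. C - (\<Sum>n<Suc N. cmod (\<beta> n) * r ^ n)) \<longlonglongrightarrow> C - C"
      by (intro tendsto_intros)
    hence "(\<lambda>N. e N) \<longlonglongrightarrow> 0" unfolding e_def by simp
    thus ?thesis by simp
  qed
  have tail: "cmod (T x * p x - (\<Sum>n\<le>N. \<beta> n * x ^ n)) \<le> e N" if "cmod x = r" for x N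
  proof -
    have nn: "norm (\<beta> n * x ^ n) = cmod (\<beta> n) * r ^ n" for n
      using that by (simp add: norm_mult norm_power)
    have "T x * p x = (\<Sum>n. \<beta> n * x ^ n)" using Gsum[of x] that by (simp add: sums_iff)
    moreover have "(\<Sum>n\<le>N. \<beta> n * x ^ n) = (\<Sum>n<Suc N. \<beta> n * x ^ n)"
      by (simp add: lessThan_Suc_atMost)
    moreover have "norm ((\<Sum>n. \<beta> n * x ^ n) - (\<Sum>n<Suc N. \<beta> n * x ^ n))
        \<le> (\<Sum>n. norm (\<beta> n * x ^ n)) - (\<Sum>n<Suc N. norm (\<beta> n * x ^ n))"
      by (rule norm_suminf_tail) (simp add: nn cB)
    ultimately show ?thesis by (simp add: nn e_def C_def)
  qed
  have pb: "cmod (p x) \<le> A1" if "cmod x = r" for x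
  proof -
    have "cmod (p x) \<le> (\<Sum>n\<le>m. cmod (\<alpha> n * x ^ n))" unfolding p_def by (rule norm_sum)
    also have "\<dots> \<le> A1" unfolding A1_def
    proof (intro sum_mono)
      fix n
      have "r ^ n \<le> 1" using r by (simp add: power_le_one)
      hence "cmod (\<alpha> n) * r ^ n \<le> cmod (\<alpha> n) * 1" by (intro mult_left_mono) auto
      thus "cmod (\<alpha> n * x ^ n) \<le> cmod (\<alpha> n)" using that by (simp add: norm_mult norm_power)
    qed
    finally show ?thesis .
  qed
  define L where "L = (\<Sum>n\<le>m. (cmod (\<beta> n) * r ^ n)\<^sup>2)"
  have main: "L \<le> Y + 2 * e N * A1 + (e N)\<^sup>2" if "m \<le> N" for N
  proof -
    define M where "M = Suc N"
    define x where "x k = complex_of_real r * cis (2 * pi * real k / real M)" for k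
    have nx: "cmod (x k) = r" for k using r by (simp add: x_def norm_mult)
    have xp: "x k ^ n = complex_of_real (r ^ n) * cis (2 * pi * real k * real n / real M)" for k n
      by (simp add: x_def power_mult_distrib Complex.DeMoivre field_simps)
    have G: "(\<Sum>n\<le>N. \<beta> n * x k ^ n) = (\<Sum>n\<le>N. (\<beta> n * complex_of_real (r ^ n)) * cis (2 * pi * real k * real n / real M))" for k
      by (simp add: xp mult_ac)
    have P: "p (x k) = (\<Sum>n\<le>N. (\<alpha>' n * complex_of_real (r ^ n)) * cis (2 * pi * real k * real n / real M))" for k
    proof -
      have "p (x k) = (\<Sum>n\<le>N. \<alpha>' n * x k ^ n)"
        unfolding p_def using that
        by (intro sum.mono_neutral_cong_left) (auto simp: \<alpha>'_def)
      thus ?thesis by (simp add: xp mult_ac)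
    qed
    have MN: "N < M" by (simp add: M_def)
    have e0: "0 \<le> e N" using tail[OF nx[of 0], of N] by (meson order_trans norm_ge_zero)
    have step: "(cmod (\<Sum>n\<le>N. \<beta> n * x k ^ n))\<^sup>2 \<le> (cmod (p (x k)))\<^sup>2 + (2 * e N * A1 + (e N)\<^sup>2)" for k
    proof -
      have "cmod (\<Sum>n\<le>N. \<beta> n * x k ^ n) \<le> cmod (T (x k) * p (x k)) + e N"
        using tail[OF nx[of k], of N] norm_triangle_ineq2[of "\<Sum>n\<le>N. \<beta> n * x k ^ n" "T (x k) * p (x k)"]
          norm_minus_commute[of "\<Sum>n\<le>N. \<beta> n * x k ^ n" "T (x k) * p (x k)"]
        by linarith
      also have "cmod (T (x k) * p (x k)) \<le> cmod (p (x k))"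
      proof -
        have "cmod (T (x k)) \<le> 1" using nx[of k] r by (intro bnd) auto
        thus ?thesis by (simp add: norm_mult mult_left_le_one_le)
      qed
      finally have h: "cmod (\<Sum>n\<le>N. \<beta> n * x k ^ n) \<le> cmod (p (x k)) + e N" by simp
      have "(cmod (\<Sum>n\<le>N. \<beta> n * x k ^ n))\<^sup>2 \<le> (cmod (p (x k)) + e N)\<^sup>2"
        using h by (intro power_mono) auto
      also have "\<dots> = (cmod (p (x k)))\<^sup>2 + 2 * e N * cmod (p (x k)) + (e N)\<^sup>2"
        by (simp add: power2_eq_square algebra_simps)
      also have "2 * e N * cmod (p (x k)) \<le> 2 * e N * A1"
        using pb[OF nx[of k]] e0 by (intro mult_left_mono) auto
      finally show ?thesis by simp
    qed
    have "real M * (\<Sum>n\<le>N. (cmod (\<beta> n * complex_of_real (r ^ n)))\<^sup>2)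
        = (\<Sum>k<M. (cmod (\<Sum>n\<le>N. \<beta> n * x k ^ n))\<^sup>2)"
      unfolding G by (rule discrete_parseval[OF MN, symmetric])
    also have "\<dots> \<le> (\<Sum>k<M. (cmod (p (x k)))\<^sup>2 + (2 * e N * A1 + (e N)\<^sup>2))"
      by (intro sum_mono step)
    also have "\<dots> = (\<Sum>k<M. (cmod (p (x k)))\<^sup>2) + real M * (2 * e N * A1 + (e N)\<^sup>2)"
      by (simp add: sum.distrib)
    also have "(\<Sum>k<M. (cmod (p (x k)))\<^sup>2) = real M * (\<Sum>n\<le>N. (cmod (\<alpha>' n * complex_of_real (r ^ n)))\<^sup>2)"
      unfolding P by (rule discrete_parseval[OF MN])
    finally have ineq: "real M * (\<Sum>n\<le>N. (cmod (\<beta> n * complex_of_real (r ^ n)))\<^sup>2)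
        \<le> real M * ((\<Sum>n\<le>N. (cmod (\<alpha>' n * complex_of_real (r ^ n)))\<^sup>2) + (2 * e N * A1 + (e N)\<^sup>2))"
      by (simp add: algebra_simps)
    have M0: "real M > 0" by (simp add: M_def)
    have ineq2: "(\<Sum>n\<le>N. (cmod (\<beta> n * complex_of_real (r ^ n)))\<^sup>2)
        \<le> (\<Sum>n\<le>N. (cmod (\<alpha>' n * complex_of_real (r ^ n)))\<^sup>2) + (2 * e N * A1 + (e N)\<^sup>2)"
      using ineq M0 by (simp add: mult_le_cancel_left_pos)
    have "L = (\<Sum>n\<le>m. (cmod (\<beta> n * complex_of_real (r ^ n)))\<^sup>2)"
      unfolding L_def using r by (simp add: norm_mult norm_power)
    also have "\<dots> \<le> (\<Sum>n\<le>N. (cmod (\<beta> n * complex_of_real (r ^ n)))\<^sup>2)"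
      using that by (intro sum_mono2) auto
    finally have L1: "L \<le> (\<Sum>n\<le>N. (cmod (\<alpha>' n * complex_of_real (r ^ n)))\<^sup>2) + (2 * e N * A1 + (e N)\<^sup>2)"
      using ineq2 by linarith
    have "(\<Sum>n\<le>N. (cmod (\<alpha>' n * complex_of_real (r ^ n)))\<^sup>2) = (\<Sum>n\<le>m. (cmod (\<alpha> n * complex_of_real (r ^ n)))\<^sup>2)"
      using that by (intro sum.mono_neutral_cong_right) (auto simp: \<alpha>'_def)
    also have "\<dots> \<le> Y" unfolding Y_def
    proof (intro sum_mono)
      fix n
      have "r ^ n \<le> 1" using r by (simp add: power_le_one)
      hence "cmod (\<alpha> n) * r ^ n \<le> cmod (\<alpha> n) * 1" by (intro mult_left_mono) auto
      hence "cmod (\<alpha> n * complex_of_real (r ^ n)) \<le> cmod (\<alpha> n)" using r by (simp add: norm_mult norm_power)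
      thus "(cmod (\<alpha> n * complex_of_real (r ^ n)))\<^sup>2 \<le> (cmod (\<alpha> n))\<^sup>2" by (intro power_mono) auto
    qed
    finally show ?thesis using L1 by linarith
  qed
  have "L \<le> Y + 2 * 0 * A1 + 0\<^sup>2"
  proof (rule LIMSEQ_le_const)
    show "(\<lambda>N. Y + 2 * e N * A1 + (e N)\<^sup>2) \<longlonglongrightarrow> Y + 2 * 0 * A1 + 0\<^sup>2"
      by (intro tendsto_intros e_lim)
    show "\<exists>N. \<forall>n\<ge>N. L \<le> Y + 2 * e n * A1 + (e n)\<^sup>2" using main by blast
  qed
  thus ?thesis by (simp add: L_def Y_def \<beta>eq)
qed



lemma toeplitz_contr:
  fixes T :: "complex \<Rightarrow> complex" and \<tau> \<alpha> :: "nat \<Rightarrow> complex"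
  assumes ser: "\<And>u. cmod u < 1 \<Longrightarrow> (\<lambda>j. \<tau> j * u ^ j) sums T u"
      and bnd: "\<And>u. cmod u < 1 \<Longrightarrow> cmod (T u) \<le> 1"
  shows "(\<Sum>n\<le>m. (cmod (\<Sum>j\<le>n. \<tau> j * \<alpha> (n - j)))\<^sup>2) \<le> (\<Sum>n\<le>m. (cmod (\<alpha> n))\<^sup>2)"
proof -
  define h where "h r = (\<Sum>n\<le>m. (cmod (\<Sum>j\<le>n. \<tau> j * \<alpha> (n - j)) * r ^ n)\<^sup>2)" for r :: real
  have lim: "(h \<longlongrightarrow> h 1) (at_left 1)"
    unfolding h_def by (intro tendsto_intros)
  have ev: "eventually (\<lambda>r. h r \<le> (\<Sum>n\<le>m. (cmod (\<alpha> n))\<^sup>2)) (at_left 1)"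
  proof -
    have "eventually (\<lambda>r. r \<in> {0<..<1}) (at_left (1::real))"
      by (rule eventually_at_left_real) simp
    thus ?thesis by (rule eventually_mono) (unfold h_def, rule toeplitz_circle[OF ser bnd], auto)
  qed
  have "h 1 \<le> (\<Sum>n\<le>m. (cmod (\<alpha> n))\<^sup>2)"
    by (rule tendsto_le[OF trivial_limit_at_left_real tendsto_const lim ev])
  thus ?thesis by (simp add: h_def)
qed

lemma abel_ineq:
  fixes w u v :: "nat \<Rightarrow> real"
  assumes dec: "\<And>n. w (Suc n) \<le> w n" and nn: "\<And>n. 0 \<le> w n"
      and pre: "\<And>m. (\<Sum>n\<le>m. u n) \<le> (\<Sum>n\<le>m. v n)"
  shows "(\<Sum>n\<le>N. w n * u n) \<le> (\<Sum>n\<le>N. w n * v n)"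
proof -
  define D where "D m = (\<Sum>n\<le>m. v n - u n)" for m
  have D0: "0 \<le> D m" for m using pre[of m] by (simp add: D_def sum_subtractf)
  have id: "(\<Sum>n\<le>N. w n * (v n - u n)) = (\<Sum>m<N. (w m - w (Suc m)) * D m) + w N * D N" for N
  proof (induction N)
    case 0 thus ?case by (simp add: D_def)
  next
    case (Suc N)
    thus ?case by (simp add: D_def algebra_simps)
  qed
  have "0 \<le> (\<Sum>m<N. (w m - w (Suc m)) * D m) + w N * D N"
    using dec nn D0 by (intro add_nonneg_nonneg sum_nonneg mult_nonneg_nonneg) auto
  hence "0 \<le> (\<Sum>n\<le>N. w n * (v n - u n))" by (simp only: id)
  thus ?thesis by (simp add: algebra_simps sum_subtractf)
qed

lemma weighted_summable_le:
  fixes w u v :: "nat \<Rightarrow> real"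
  assumes dec: "\<And>n. w (Suc n) \<le> w n" and nn: "\<And>n. 0 \<le> w n"
      and pre: "\<And>m. (\<Sum>n\<le>m. u n) \<le> (\<Sum>n\<le>m. v n)"
      and u0: "\<And>n. 0 \<le> u n" and v0: "\<And>n. 0 \<le> v n"
      and sv: "summable (\<lambda>n. w n * v n)"
  shows "summable (\<lambda>n. w n * u n) \<and> (\<Sum>n. w n * u n) \<le> (\<Sum>n. w n * v n)"
proof -
  have le: "(\<Sum>n\<le>N. w n * u n) \<le> (\<Sum>n. w n * v n)" for N
  proof -
    have "(\<Sum>n\<le>N. w n * u n) \<le> (\<Sum>n\<le>N. w n * v n)" by (rule abel_ineq[of w u v, OF dec nn pre])
    also have "\<dots> \<le> (\<Sum>n. w n * v n)"
      using sv nn v0 by (intro sum_le_suminf) auto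
    finally show ?thesis .
  qed
  have s: "summable (\<lambda>n. w n * u n)"
    using nn u0 le by (intro bounded_imp_summable) auto
  have "(\<Sum>n. w n * u n) \<le> (\<Sum>n. w n * v n)"
  proof (rule suminf_le_const[OF s])
    fix N show "(\<Sum>n<N. w n * u n) \<le> (\<Sum>n. w n * v n)"
    proof (cases N)
      case 0 thus ?thesis using sv nn v0 by (simp add: suminf_nonneg)
    next
      case (Suc N') thus ?thesis using le[of N'] by (simp add: lessThan_Suc_atMost)
    qed
  qed
  with s show ?thesis by blast
qed



lemma conv_pow:
  fixes c d :: "nat \<Rightarrow> complex"
  shows "(\<Sum>i\<le>k. (c i * x ^ i) * (d (k - i) * x ^ (k - i))) = (\<Sum>i\<le>k. c i * d (k - i)) * x ^ k"
proof -
  have "(\<Sum>i\<le>k. (c i * x ^ i) * (d (k - i) * x ^ (k - i))) = (\<Sum>i\<le>k. c i * d (k - i) * x ^ k)"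
  proof (intro sum.cong refl)
    fix i assume "i \<in> {..k}"
    hence "x ^ i * x ^ (k - i) = x ^ k" by (simp add: power_add[symmetric])
    thus "(c i * x ^ i) * (d (k - i) * x ^ (k - i)) = c i * d (k - i) * x ^ k"
      by (metis mult.assoc mult.left_commute)
  qed
  thus ?thesis by (simp add: sum_distrib_right)
qed

lemma qfact_Suc: "qfact q (Suc n) = qfact q n * qint q (Suc n)"
  by (simp add: qfact_def)

lemma qint_Suc_mult: "q \<noteq> 1 \<Longrightarrow> qint q (Suc n) * (1 - q) = 1 - q ^ Suc n"
  by (simp add: qint_def sum_gp_strict del: sum.lessThan_Suc)

lemma qint_nonneg: "0 \<le> q \<Longrightarrow> 0 \<le> qint q n"
  by (simp add: qint_def sum_nonneg)

lemma qfact_nonneg: "0 \<le> q \<Longrightarrow> 0 \<le> qfact q n"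
  by (simp add: qfact_def prod_nonneg qint_nonneg)

theorem lemma8p5:
  fixes q :: real and S :: "complex \<Rightarrow> complex" and k :: nat
  assumes "0 < q" "q < 1" "schur_function S"
  shows "contractive_multiplier q
           (\<lambda>z. S (z * complex_of_real (sqrt (1 - q) * q powr (real k / 2))))"
proof -
  have q0: "0 < q" and q1: "q < 1" using assms by auto
  have holS: "S holomorphic_on ball 0 1" and bS: "\<And>z. z \<in> ball 0 1 \<Longrightarrow> cmod (S z) \<le> 1"
    using assms(3) by (auto simp: schur_function_def)
  define t where "t = sqrt (1 - q)"
  define \<rho> where "\<rho> = q powr (real k / 2)"
  define r where "r = t * \<rho>"
  have t0: "0 < t" using q1 by (simp add: t_def)
  have t2: "t\<^sup>2 = 1 - q" using q1 by (simp add: t_def)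
  have \<rho>0: "0 < \<rho>" using q0 by (simp add: \<rho>_def)
  have \<rho>1: "\<rho> \<le> 1" unfolding \<rho>_def using q0 q1 by (intro powr_le1) auto
  have r0: "0 < r" using t0 \<rho>0 by (simp add: r_def)
  define \<tau> where "\<tau> j = (deriv ^^ j) S 0 / fact j" for j
  have serS: "(\<lambda>j. \<tau> j * w ^ j) sums S w" if "cmod w < 1" for w
    using holomorphic_power_series[OF holS, of w] that by (simp add: \<tau>_def)
  have absS: "summable (\<lambda>j. norm (\<tau> j * w ^ j))" if "cmod w < 1" for w
  proof -
    define w' where "w' = complex_of_real ((cmod w + 1) / 2)"
    have nw': "cmod w' = (cmod w + 1) / 2" unfolding w'_def by (simp only: norm_of_real) simp
    have "summable (\<lambda>j. \<tau> j * w' ^ j)" using serS[of w'] nw' that by (simp add: sums_iff)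
    moreover have "cmod w < cmod w'" using nw' that by simp
    ultimately show ?thesis by (rule powser_insidea)
  qed
  show ?thesis unfolding contractive_multiplier_def
  proof (intro allI impI)
    fix f a assume H: "H2q_coeffs q f a"
    have sa: "summable (\<lambda>n. qfact q n * (cmod (a n))\<^sup>2)"
      and fa: "\<And>z. z \<in> qdisk q \<Longrightarrow> (\<lambda>n. a n * z ^ n) sums f z"
      using H by (auto simp: H2q_coeffs_def)
    define \<sigma> where "\<sigma> j = \<tau> j * complex_of_real r ^ j" for j
    define b where "b n = (\<Sum>j\<le>n. \<sigma> j * a (n - j))" for n
    have sums_b: "(\<lambda>n. b n * z ^ n) sums (S (z * complex_of_real r) * f z)" if z: "z \<in> qdisk q" for z
    proof -
      have nz: "cmod z < 1 / t" using z by (simp add: qdisk_def t_def)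
      define z' where "z' = complex_of_real ((cmod z + 1 / t) / 2)"
      have nz': "cmod z' = (cmod z + 1 / t) / 2" unfolding z'_def using t0
        by (simp only: norm_of_real) simp
      have z'd: "z' \<in> qdisk q" using nz' nz t0 by (simp add: qdisk_def t_def)
      have absa: "summable (\<lambda>n. norm (a n * z ^ n))"
      proof (rule powser_insidea)
        show "summable (\<lambda>n. a n * z' ^ n)" using fa[OF z'd] by (simp add: sums_iff)
        show "cmod z < cmod z'" using nz' nz by simp
      qed
      have nzr: "cmod (z * complex_of_real r) < 1"
      proof -
        have "cmod (z * complex_of_real r) = cmod z * t * \<rho>" using t0 \<rho>0 by (simp add: norm_mult r_def)
        also have "cmod z * t < 1" using nz t0 by (simp add: field_simps)
        hence "cmod z * t * \<rho> < 1 * 1" using \<rho>0 \<rho>1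
          using t0 by (intro mult_less_le_imp_less) auto
        finally show ?thesis by simp
      qed
      have eq\<sigma>: "\<sigma> j * z ^ j = \<tau> j * (z * complex_of_real r) ^ j" for j
        by (simp add: \<sigma>_def power_mult_distrib mult_ac)
      have abs\<sigma>: "summable (\<lambda>j. norm (\<sigma> j * z ^ j))"
        unfolding eq\<sigma> by (rule absS[OF nzr])
      have "(\<lambda>n. \<Sum>i\<le>n. (\<sigma> i * z ^ i) * (a (n - i) * z ^ (n - i))) sums
              ((\<Sum>j. \<sigma> j * z ^ j) * (\<Sum>i. a i * z ^ i))"
        by (rule Cauchy_product_sums[OF abs\<sigma> absa])
      moreover have "(\<Sum>j. \<sigma> j * z ^ j) = S (z * complex_of_real r)"
        unfolding eq\<sigma> using serS[OF nzr] by (simp add: sums_iff)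
      moreover have "(\<Sum>i. a i * z ^ i) = f z" using fa[OF z] by (simp add: sums_iff)
      ultimately show ?thesis by (simp add: conv_pow b_def)
    qed
    define \<alpha> where "\<alpha> n = a n / complex_of_real (t ^ n)" for n
    define \<beta> where "\<beta> n = b n / complex_of_real (t ^ n)" for n
    have \<beta>eq: "\<beta> n = (\<Sum>j\<le>n. (\<tau> j * complex_of_real \<rho> ^ j) * \<alpha> (n - j))" for n
    proof -
      have "\<beta> n = (\<Sum>j\<le>n. \<sigma> j * a (n - j) / complex_of_real (t ^ n))"
        by (simp add: \<beta>_def b_def sum_divide_distrib)
      also have "\<dots> = (\<Sum>j\<le>n. (\<tau> j * complex_of_real \<rho> ^ j) * \<alpha> (n - j))"
      proof (intro sum.cong refl)
        fix j assume "j \<in> {..n}"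
        hence tn: "t ^ n = t ^ j * t ^ (n - j)" by (simp add: power_add[symmetric])
        show "\<sigma> j * a (n - j) / complex_of_real (t ^ n) = (\<tau> j * complex_of_real \<rho> ^ j) * \<alpha> (n - j)"
          using t0 unfolding \<sigma>_def \<alpha>_def tn r_def
          by (simp add: power_mult_distrib field_simps)
      qed
      finally show ?thesis .
    qed
    define T where "T u = S (complex_of_real \<rho> * u)" for u
    have serT: "(\<lambda>j. (\<tau> j * complex_of_real \<rho> ^ j) * u ^ j) sums T u" if "cmod u < 1" for u
    proof -
      have "cmod (complex_of_real \<rho> * u) < 1"
      proof -
        have "cmod (complex_of_real \<rho> * u) = \<rho> * cmod u" using \<rho>0 by (simp add: norm_mult)
        also have "\<dots> \<le> cmod u" using \<rho>1 \<rho>0 by (simp add: mult_left_le_one_le)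
        finally show ?thesis using that by simp
      qed
      from serS[OF this] show ?thesis by (simp add: T_def power_mult_distrib mult_ac)
    qed
    have bT: "cmod (T u) \<le> 1" if "cmod u < 1" for u
    proof -
      have "cmod (complex_of_real \<rho> * u) = \<rho> * cmod u" using \<rho>0 by (simp add: norm_mult)
      also have "\<dots> \<le> cmod u" using \<rho>1 \<rho>0 by (simp add: mult_left_le_one_le)
      finally show ?thesis unfolding T_def using that by (intro bS) auto
    qed
    have pre: "(\<Sum>n\<le>m. (cmod (\<beta> n))\<^sup>2) \<le> (\<Sum>n\<le>m. (cmod (\<alpha> n))\<^sup>2)" for m
      unfolding \<beta>eq by (rule toeplitz_contr[OF serT bT])
    define w where "w n = qfact q n * (t ^ n)\<^sup>2" for n
    have w0: "0 \<le> w n" for n using q0 by (simp add: w_def qfact_nonneg)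
    have wdec: "w (Suc n) \<le> w n" for n
    proof -
      have "w (Suc n) = w n * (qint q (Suc n) * t\<^sup>2)"
        by (simp add: w_def qfact_Suc power_mult_distrib mult_ac)
      also have "\<dots> = w n * (qint q (Suc n) * (1 - q))" by (simp add: t2)
      also have "\<dots> = w n * (1 - q ^ Suc n)" using q1 by (simp add: qint_Suc_mult)
      also have "\<dots> \<le> w n * 1" using w0 q0 by (intro mult_left_mono) auto
      finally show ?thesis by simp
    qed
    have wa: "qfact q n * (cmod (a n))\<^sup>2 = w n * (cmod (\<alpha> n))\<^sup>2" for n
      using t0 by (simp add: w_def \<alpha>_def norm_divide norm_power power_divide)
    have wb: "qfact q n * (cmod (b n))\<^sup>2 = w n * (cmod (\<beta> n))\<^sup>2" for n
      using t0 by (simp add: w_def \<beta>_def norm_divide norm_power power_divide)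
    have res: "summable (\<lambda>n. w n * (cmod (\<beta> n))\<^sup>2) \<and>
        (\<Sum>n. w n * (cmod (\<beta> n))\<^sup>2) \<le> (\<Sum>n. w n * (cmod (\<alpha> n))\<^sup>2)"
      using sa unfolding wa by (intro weighted_summable_le[of w "\<lambda>n. (cmod (\<beta> n))\<^sup>2" "\<lambda>n. (cmod (\<alpha> n))\<^sup>2", OF wdec w0 pre]) auto
    show "\<exists>b. H2q_coeffs q (\<lambda>z. S (z * complex_of_real (sqrt (1 - q) * q powr (real k / 2))) * f z) b \<and>
             H2q_normsq q b \<le> H2q_normsq q a"
    proof (intro exI conjI)
      show "H2q_coeffs q (\<lambda>z. S (z * complex_of_real (sqrt (1 - q) * q powr (real k / 2))) * f z) b"
        unfolding H2q_coeffs_def using res sums_b unfolding wb by (simp add: r_def t_def \<rho>_def)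
      show "H2q_normsq q b \<le> H2q_normsq q a"
        unfolding H2q_normsq_def wa wb using res by simp
    qed
  qed
qed

end
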